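(* Let $\boldsymbol{X}_1,\dots,\boldsymbol{X}_N\in\mathbb{R}^p$ be data, with $[N]=\mathcal{I}\cup\mathcal{O}$ a disjoint partition into inliers and outliers, and let $B_1,\dots,B_L$ be a partition of $[N]$ into $L$ blocks each of size $B=N/L$, with $N>L$. Assume: (A1) $\{\boldsymbol{X}_i\}_{i\in\mathcal{I}}$ are i.i.d. with distribution $P$; (A2) $\mu_4=\int\|\boldsymbol{x}\|^4P(d\boldsymbol{x})<\infty$; (A3) there exists $\eta>0$ with $L>(2+\eta)|\mathcal{O}|$. No assumption whatsoever is made on $\{\boldsymbol{X}_i\}_{i\in\mathcal{O}}$. Then with probability at least $1-2\exp\!\left(-2L\left(\frac{2}{4+\eta}-\frac{|\mathcal{O}|}{L}\right)^2\right)$, \[\sup_{Q\in\mathcal{Q}_d}\left|\mathrm{MoM}_L^N(f_Q)-Pf_Q\right|\le C\max\left\{\sqrt{\frac{L}{N}},\ \frac{\sqrt{|\mathcal{I}|}}{N}\right\},\] where $C=2\max\left\{\sqrt{\frac{8(4+\eta)C(P)}{\eta}},\ \frac{16\sqrt{(p-d)\mu_4}\,(4+\eta)}{\eta}\right\}$ and $C(P)=(\mu_4+2\mu_2^2)(p-d)+(\mu_2^2-1)(p-d)^2$.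
   Context: $\mathcal{Q}_d$ denotes the set of all $p\times p$ (orthogonal) projection matrices of rank $d$. For $Q\in\mathcal{Q}_d$, $f_Q(\boldsymbol{x})=\boldsymbol{x}^\top(I-Q)\boldsymbol{x}$. For a measure $\mu$, $\mu f=\int f\,d\mu$; in particular $Pf_Q=\int f_Q\,dP$. $P_{B_\ell}$ is the empirical distribution of $\{\boldsymbol{X}_i\}_{i\in B_\ell}$, so $P_{B_\ell}f_Q=\frac1B\sum_{i\in B_\ell}f_Q(\boldsymbol{X}_i)$. The median-of-means objective is $\mathrm{MoM}_L^N(f_Q)=\mathrm{Median}\{P_{B_\ell}f_Q:\ell=1,\dots,L\}$. $\mu_k=\int\|\boldsymbol{x}\|_2^k\,dP$. *)

theory Defs
  imports "HOL-Probability.Probability"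
begin

definition proj_mats :: "nat \<Rightarrow> (real^'p^'p) set" where
  "proj_mats d = {Q. Q ** Q = Q \<and> transpose Q = Q \<and> rank Q = d}"

definition fQ :: "real^'p^'p \<Rightarrow> real^'p \<Rightarrow> real" where
  "fQ Q x = x \<bullet> ((mat 1 - Q) *v x)"

definition median :: "real list \<Rightarrow> real" where
  "median xs = (let ys = sort xs; n = length xs in
     if odd n then ys ! (n div 2) else (ys ! (n div 2 - 1) + ys ! (n div 2)) / 2)"

definition MoM :: "nat \<Rightarrow> (nat \<Rightarrow> nat set) \<Rightarrow> nat \<Rightarrow> ('x \<Rightarrow> real) \<Rightarrow> (nat \<Rightarrow> 'x) \<Rightarrow> real" where
  "MoM L Bl B f xs = median (map (\<lambda>l. (\<Sum>i\<in>Bl l. f (xs i)) / real B) [0..<L])"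

definition moment :: "(real^'p) measure \<Rightarrow> nat \<Rightarrow> real" where
  "moment P k = (\<integral>x. norm x ^ k \<partial>P)"

end

theory Submission
  imports Defs
begin

definition outer :: "real^'p \<Rightarrow> real^'p^'p" where
  "outer x = (\<chi> a b. x$a * x$b)"

lemma fQ_outer: "fQ Q x = (mat 1 - Q) \<bullet> outer x"
  unfolding fQ_def outer_def inner_vec_def matrix_vector_mult_def
  by (simp add: sum_distrib_left mult_ac)

lemma norm_sq_trace:
  fixes R :: "real^'p^'p"
  assumes "R ** R = R" "transpose R = R"
  shows "norm R ^ 2 = trace R"
proof -
  have sym: "R$b$a = R$a$b" for a b
    using assms(2) by (metis transpose_def vec_lambda_beta)
  have "norm R ^ 2 = (\<Sum>a\<in>UNIV. \<Sum>b\<in>UNIV. R$a$b * R$a$b)"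
    by (simp add: power2_norm_eq_inner inner_vec_def)
  also have "\<dots> = (\<Sum>a\<in>UNIV. (R ** R)$a$a)"
    by (simp add: matrix_matrix_mult_def sym)
  also have "\<dots> = trace R" using assms(1) by (simp add: trace_def)
  finally show ?thesis .
qed

lemma trace_proj_rank:
  fixes Q :: "real^'p^'p"
  assumes idem: "Q ** Q = Q" and sym: "transpose Q = Q"
  shows "trace Q = real (rank Q)"
proof -
  define W where "W = range (\<lambda>x. Q *v x)"
  have sW: "subspace W" unfolding W_def
    by (simp add: linear_subspace_image matrix_vector_mul_linear)
  obtain U where U: "U \<subseteq> W" "pairwise orthogonal U" "\<And>x. x \<in> U \<Longrightarrow> norm x = 1"
     "independent U" "card U = dim W" "span U = W"
    using orthonormal_basis_subspace[OF sW] by blast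
  have finU: "finite U" using U(4) independent_imp_finite by blast
  have qfix: "Q *v u = u" if uU: "u \<in> U" for u
  proof -
    obtain y where "u = Q *v y" using U(1) uU unfolding W_def by blast
    then show ?thesis by (simp add: matrix_vector_mul_assoc idem)
  qed
  have expand: "Q *v x = (\<Sum>u\<in>U. (x \<bullet> u) *\<^sub>R u)" for x
  proof -
    have "Q *v x \<in> span U" using U(6) unfolding W_def by auto
    then have "Q *v x = (\<Sum>u\<in>U. ((Q *v x) \<bullet> u) *\<^sub>R u)"
      using orthonormal_basis_expand[OF U(2) U(3) _ finU] by simp
    moreover have "(Q *v x) \<bullet> u = x \<bullet> u" if "u \<in> U" for u
    proof -
      have "(Q *v x) \<bullet> u = u \<bullet> (Q *v x)" by (simp add: inner_commute)
      also have "\<dots> = (u v* Q) \<bullet> x" by (simp add: dot_lmul_matrix)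
      also have "u v* Q = transpose Q *v u" by simp
      also have "\<dots> = u" using sym qfix[OF that] by simp
      finally show ?thesis by (simp add: inner_commute)
    qed
    ultimately show ?thesis by (metis (no_types, lifting) sum.cong)
  qed
  have "trace Q = (\<Sum>a\<in>UNIV. (Q *v axis a 1) $ a)"
    by (simp add: trace_def matrix_vector_mult_basis column_def)
  also have "\<dots> = (\<Sum>a\<in>UNIV. \<Sum>u\<in>U. (u $ a) * (u $ a))"
    by (simp add: expand inner_axis' mult_ac)
  also have "\<dots> = (\<Sum>u\<in>U. \<Sum>a\<in>UNIV. (u $ a) * (u $ a))"
    by (rule sum.swap)
  also have "\<dots> = (\<Sum>u\<in>U. norm u ^ 2)"
    by (simp add: power2_norm_eq_inner inner_vec_def)
  also have "\<dots> = real (card U)" using U(3) by simp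
  also have "\<dots> = real (rank Q)" using U(5) by (simp add: rank_dim_range W_def)
  finally show ?thesis .
qed

lemma norm_I_minus_proj:
  fixes Q :: "real^'p^'p"
  assumes "Q \<in> proj_mats d"
  shows "norm (mat 1 - Q) ^ 2 = real CARD('p) - real d"
proof -
  have Q: "Q ** Q = Q" "transpose Q = Q" "rank Q = d" using assms by (auto simp: proj_mats_def)
  have "(mat 1 - Q) ** (mat 1 - Q) = mat 1 - Q"
  proof -
    have "Q *v (Q *v x) = Q *v x" for x using Q(1) by (metis matrix_vector_mul_assoc)
    then show ?thesis
      by (simp add: matrix_eq matrix_vector_mul_assoc[symmetric] matrix_vector_mult_diff_rdistrib matrix_vector_mult_diff_distrib)
  qed
  moreover have "transpose (mat 1 - Q) = mat 1 - Q"
    using Q by (simp add: transpose_def mat_def vec_eq_iff) 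
  ultimately have "norm (mat 1 - Q) ^ 2 = trace (mat 1 - Q)" by (rule norm_sq_trace)
  also have "\<dots> = real CARD('p) - real d"
    using Q trace_proj_rank[OF Q(1,2)] by (simp add: trace_sub trace_I)
  finally show ?thesis .
qed

lemma median_close:
  fixes xs :: "real list"
  assumes n0: "length xs > 0"
    and cnt: "real (card {i. i < length xs \<and> \<bar>xs!i - c\<bar> \<le> e}) > real (length xs) / 2"
  shows "\<bar>median xs - c\<bar> \<le> e"
proof -
  define n where "n = length xs"
  define ys where "ys = sort xs"
  define P where "P = (\<lambda>v::real. \<bar>v - c\<bar> \<le> e)"
  have len: "length ys = n" by (simp add: ys_def n_def)
  have srt: "sorted ys" by (simp add: ys_def)
  have "card {i. i < length xs \<and> P (xs!i)} = length (filter P xs)"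
    by (simp add: length_filter_conv_card)
  also have "\<dots> = length (filter P ys)"
    by (simp add: ys_def filter_sort)
  also have "\<dots> = card {i. i < n \<and> P (ys!i)}"
    by (simp add: length_filter_conv_card len)
  finally have cnt': "real (card {i. i < n \<and> P (ys!i)}) > real n / 2"
    using cnt by (simp add: P_def n_def)
  have up: "ys!j \<le> c + e" if "j < n" "real j \<le> real n / 2" for j
  proof (rule ccontr)
    assume "\<not> ?thesis"
    then have "{i. i < n \<and> P (ys!i)} \<subseteq> {..<j}"
    proof (safe)
      fix i assume "i < n" "P (ys!i)"
      show "i < j"
      proof (rule ccontr)
        assume "\<not> i < j"
        then have "ys!j \<le> ys!i" using srt \<open>i < n\<close> len by (simp add: sorted_nth_mono)
        then show False using \<open>\<not> ys!j \<le> c + e\<close> \<open>P (ys!i)\<close> by (auto simp: P_def)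
      qed
    qed
    then have "card {i. i < n \<and> P (ys!i)} \<le> j" using card_mono[OF finite_lessThan] by fastforce
    then show False using cnt' that by linarith
  qed
  have lo: "ys!j \<ge> c - e" if "j < n" "real j + 1 \<ge> real n / 2" for j
  proof (rule ccontr)
    assume "\<not> ?thesis"
    then have "{i. i < n \<and> P (ys!i)} \<subseteq> {j<..<n}"
    proof (intro subsetI)
      fix i assume "i \<in> {i. i < n \<and> P (ys!i)}"
      then have "i < n" "P (ys!i)" by auto
      moreover have "j < i"
      proof (rule ccontr)
        assume "\<not> j < i"
        then have "ys!i \<le> ys!j" using srt \<open>j < n\<close> len by (simp add: sorted_nth_mono)
        then show False using \<open>\<not> ys!j \<ge> c - e\<close> \<open>P (ys!i)\<close> by (auto simp: P_def)
      qed
      ultimately show "i \<in> {j<..<n}" by simp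
    qed
    then have "card {i. i < n \<and> P (ys!i)} \<le> n - Suc j"
      using card_mono[OF finite_greaterThanLessThan] by fastforce
    then show False using cnt' that by linarith
  qed
  have n0': "n > 0" using n0 by (simp add: n_def)
  show ?thesis
  proof (cases "odd n")
    case True
    have "n div 2 < n" using n0' by simp
    moreover have "real (n div 2) \<le> real n / 2" by linarith
    moreover have "real (n div 2) + 1 \<ge> real n / 2" by linarith
    ultimately have "ys ! (n div 2) \<le> c + e" "ys ! (n div 2) \<ge> c - e" using up lo by blast+
    then have "\<bar>ys ! (n div 2) - c\<bar> \<le> e" by linarith
    then show ?thesis using True by (simp add: median_def Let_def ys_def n_def)
  next
    case False
    then have n2: "n \<ge> 2" using n0' by presburger
    have a: "\<bar>ys ! (n div 2) - c\<bar> \<le> e"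
    proof -
      have "n div 2 < n" using n0' by simp
      moreover have "real (n div 2) \<le> real n / 2" by linarith
      moreover have "real (n div 2) + 1 \<ge> real n / 2" by linarith
      ultimately have "ys ! (n div 2) \<le> c + e" "ys ! (n div 2) \<ge> c - e" using up lo by blast+
      then show ?thesis by linarith
    qed
    have b: "\<bar>ys ! (n div 2 - 1) - c\<bar> \<le> e"
    proof -
      have "n div 2 - 1 < n" using n0' by simp
      moreover have "real (n div 2 - 1) \<le> real n / 2" using n2 by linarith
      moreover have "real (n div 2 - 1) + 1 \<ge> real n / 2" using n2 False
      proof -
        obtain m where m: "n = 2 * m" using False by blast
        then have "m \<ge> 1" using n2 by simp
        then show ?thesis using m by (simp add: of_nat_diff)
      qed
      ultimately have "ys ! (n div 2 - 1) \<le> c + e" "ys ! (n div 2 - 1) \<ge> c - e" using up lo by blast+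
      then show ?thesis by linarith
    qed
    have "\<bar>(ys ! (n div 2 - 1) + ys ! (n div 2)) / 2 - c\<bar> \<le> e" 
    proof -
      have avg: "\<bar>(u + v) / 2 - c\<bar> \<le> e" if "\<bar>u - c\<bar> \<le> e" "\<bar>v - c\<bar> \<le> e" for u v :: real
        using that unfolding abs_le_iff by argo
      show ?thesis using avg[OF b a] .
    qed
    then show ?thesis using False by (simp add: median_def Let_def ys_def n_def)
  qed
qed

lemma outer_borel[measurable]: "outer \<in> borel_measurable borel"
  unfolding outer_def
  by (intro borel_measurable_continuous_onI continuous_intros)

lemma outer_nth: "outer x $ a $ b = x$a * x$b"
  by (simp add: outer_def)

lemma norm_outer: "norm (outer x) = norm x ^ 2"
proof -
  have "norm (outer x) ^ 2 = (\<Sum>a\<in>UNIV. \<Sum>b\<in>UNIV. (x$a*x$b) * (x$a*x$b))"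
    by (simp add: power2_norm_eq_inner inner_vec_def outer_def)
  also have "\<dots> = (\<Sum>a\<in>UNIV. x$a*x$a) * (\<Sum>b\<in>UNIV. x$b*x$b)"
    by (simp add: sum_product mult_ac)
  also have "\<dots> = (norm x ^ 2) ^ 2"
  proof -
    have e: "(\<Sum>a\<in>UNIV. x$a*x$a) = norm x ^ 2" by (simp add: power2_norm_eq_inner inner_vec_def)
    show ?thesis by (simp only: e power2_eq_square)
  qed
  finally show ?thesis
    by (metis norm_ge_zero power2_eq_imp_eq zero_le_power2)
qed

locale mom_setting = prob_space M
  for M :: "'a measure" +
  fixes X :: "nat \<Rightarrow> 'a \<Rightarrow> real^'p" and P :: "(real^'p) measure" and Inl :: "nat set"
  assumes P: "prob_space P" "sets P = sets borel"
    and ind: "indep_vars (\<lambda>_. borel) X Inl"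
    and dist: "\<And>i. i \<in> Inl \<Longrightarrow> distr M borel (X i) = P"
    and int4: "integrable P (\<lambda>x. norm x ^ 4)"
begin

lemma rvX[measurable]: "i \<in> Inl \<Longrightarrow> X i \<in> borel_measurable M"
  using ind unfolding indep_vars_def by blast

lemma measP: "g \<in> borel_measurable P \<longleftrightarrow> g \<in> borel_measurable borel"
  by (subst measurable_cong_sets[OF P(2) refl]) (rule refl)

lemma transfer_int:
  fixes g :: "real^'p \<Rightarrow> 'b::{banach, second_countable_topology}"
  assumes i: "i \<in> Inl" and g: "g \<in> borel_measurable borel"
  shows "integrable M (\<lambda>\<omega>. g (X i \<omega>)) \<longleftrightarrow> integrable P g"
    and "(\<integral>\<omega>. g (X i \<omega>) \<partial>M) = (\<integral>x. g x \<partial>P)"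
  using integrable_distr_eq[OF rvX[OF i] g] integral_distr[OF rvX[OF i] g] dist[OF i] by auto

lemma int2: "integrable P (\<lambda>x. norm x ^ 2)"
proof (rule Bochner_Integration.integrable_bound[where f="\<lambda>x. 1 + norm x ^ 4"])
  show "integrable P (\<lambda>x. 1 + norm x ^ 4)"
  proof -
    interpret Pp: prob_space P by (rule P(1))
    show ?thesis using int4 by (intro Bochner_Integration.integrable_add) auto
  qed
  show "(\<lambda>x. norm x ^ 2) \<in> borel_measurable P" unfolding measP by measurable
  have "norm x ^ 2 \<le> 1 + norm x ^ 4" for x :: "real^'p"
  proof -
    have "norm x ^ 2 \<le> 1 + (norm x ^ 2) ^ 2"
    proof -
      have "0 \<le> (norm x ^ 2 - 1) ^ 2" by simp
      moreover have "0 \<le> norm x ^ 2" by simp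
      ultimately show ?thesis unfolding power2_diff power_one mult_1_right by linarith
    qed
    then show ?thesis by (simp add: power_mult[symmetric])
  qed
  then show "AE x in P. norm (norm x ^ 2) \<le> norm (1 + norm x ^ 4)" by (intro AE_I2) simp
qed

lemma int_outer: "integrable P outer"
  by (rule Bochner_Integration.integrable_bound[OF int2]) (auto simp: measP norm_outer intro: outer_borel)

lemma int_outer2: "integrable P (\<lambda>x. norm (outer x) ^ 2)"
  using int4 by (simp add: norm_outer power_mult[symmetric])

definition S where "S = (\<integral>x. outer x \<partial>P)"

lemma integral_fQ: "(\<integral>x. fQ Q x \<partial>P) = (mat 1 - Q) \<bullet> S"
  unfolding fQ_outer S_def using int_outer by simp

lemma S_nth: "S $ a $ b = (\<integral>x. x$a * x$b \<partial>P)"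
proof -
  have "S $ a $ b = (\<integral>x. outer x $ a $ b \<partial>P)"
    unfolding S_def
    using integral_bounded_linear[OF bounded_linear_vec_nth, of P "\<lambda>x. outer x $ a"]
      integral_bounded_linear[OF bounded_linear_vec_nth, of P outer]
      int_outer integrable_bounded_linear[OF bounded_linear_vec_nth, of P outer]
    by simp
  then show ?thesis by (simp add: outer_nth)
qed

lemma comp_bound: "\<bar>outer x $ a $ b\<bar> \<le> norm (outer x)"
proof -
  have "norm (outer x $ a $ b) \<le> norm (outer x $ a)" by (rule Finite_Cartesian_Product.norm_nth_le)
  also have "\<dots> \<le> norm (outer x)" by (rule Finite_Cartesian_Product.norm_nth_le)
  finally show ?thesis by simp
qed

lemma comp_meas[measurable]: "(\<lambda>x. outer x $ a $ b) \<in> borel_measurable borel"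
  unfolding outer_nth by (intro borel_measurable_continuous_onI continuous_intros)

lemma int_comp: "integrable P (\<lambda>x. outer x $ a $ b)"
  by (rule Bochner_Integration.integrable_bound[OF int_outer])
     (auto simp: measP comp_bound)

lemma int_Zsq: "integrable P (\<lambda>x. norm (outer x - S) ^ 2)"
proof (rule Bochner_Integration.integrable_bound[where f="\<lambda>x. 2 * norm (outer x) ^ 2 + 2 * norm S ^ 2"])
  interpret Pp: prob_space P by (rule P(1))
  show "integrable P (\<lambda>x. 2 * norm (outer x) ^ 2 + 2 * norm S ^ 2)"
    using int_outer2 by auto
  show "(\<lambda>x. norm (outer x - S) ^ 2) \<in> borel_measurable P" unfolding measP by measurable
  have "norm (outer x - S) ^ 2 \<le> 2 * norm (outer x) ^ 2 + 2 * norm S ^ 2" for x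
  proof -
    have "norm (outer x - S) \<le> norm (outer x) + norm S" by (rule norm_triangle_ineq4)
    then have "norm (outer x - S) ^ 2 \<le> (norm (outer x) + norm S) ^ 2"
      by (simp add: power_mono)
    also have "\<dots> \<le> 2 * norm (outer x) ^ 2 + 2 * norm S ^ 2"
    proof -
      have "0 \<le> (norm (outer x) - norm S) ^ 2" by simp
      then show ?thesis unfolding power2_sum power2_diff by linarith
    qed
    finally show ?thesis .
  qed
  then show "AE x in P. norm (norm (outer x - S) ^ 2) \<le> norm (2 * norm (outer x) ^ 2 + 2 * norm S ^ 2)"
    by (intro AE_I2) simp
qed

lemma Zsq_le: "(\<integral>x. norm (outer x - S) ^ 2 \<partial>P) \<le> moment P 4"
proof -
  interpret Pp: prob_space P by (rule P(1))
  have e: "norm (outer x - S) ^ 2 = norm (outer x) ^ 2 - 2 * (outer x \<bullet> S) + norm S ^ 2" for x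
    by (simp add: power2_norm_eq_inner inner_diff_left inner_diff_right inner_commute)
  have "(\<integral>x. norm (outer x - S) ^ 2 \<partial>P) =
        (\<integral>x. norm (outer x) ^ 2 \<partial>P) - 2 * (\<integral>x. outer x \<bullet> S \<partial>P) + norm S ^ 2"
    unfolding e using int_outer2 int_outer by (simp add: Pp.prob_space)
  also have "(\<integral>x. outer x \<bullet> S \<partial>P) = S \<bullet> S" using int_outer by (simp add: S_def)
  also have "(\<integral>x. norm (outer x) ^ 2 \<partial>P) = moment P 4"
    by (simp add: moment_def norm_outer power_mult[symmetric])
  finally show ?thesis by (simp add: power2_norm_eq_inner)
qed

lemma comp_mean0: "(\<integral>x. outer x $ a $ b - S $ a $ b \<partial>P) = 0"
proof -
  interpret Pp: prob_space P by (rule P(1))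
  show ?thesis using int_comp[of a b] by (simp add: S_nth outer_nth Pp.prob_space)
qed

lemma pair_indep:
  assumes "i \<in> Inl" "j \<in> Inl" "i \<noteq> j" "g \<in> borel_measurable borel" "h \<in> borel_measurable borel"
  shows "indep_var borel (\<lambda>\<omega>. (g::real^'p \<Rightarrow> real) (X i \<omega>)) borel (\<lambda>\<omega>. (h::real^'p \<Rightarrow> real) (X j \<omega>))"
proof -
  have "indep_var borel ((\<lambda>f. g (f i)) \<circ> (\<lambda>\<omega>. restrict (\<lambda>k. X k \<omega>) {i}))
                  borel ((\<lambda>f. h (f j)) \<circ> (\<lambda>\<omega>. restrict (\<lambda>k. X k \<omega>) {j}))"
    using assms by (intro indep_var_compose[OF indep_var_restrict[OF ind]]) auto
  also have "((\<lambda>f. g (f i)) \<circ> (\<lambda>\<omega>. restrict (\<lambda>k. X k \<omega>) {i})) = (\<lambda>\<omega>. g (X i \<omega>))" by auto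
  also have "((\<lambda>f. h (f j)) \<circ> (\<lambda>\<omega>. restrict (\<lambda>k. X k \<omega>) {j})) = (\<lambda>\<omega>. h (X j \<omega>))" by auto
  finally show ?thesis .
qed

definition Z where "Z i \<omega> = outer (X i \<omega>) - S"

lemma Z_int:
  assumes "i \<in> Inl" "j \<in> Inl"
  shows "integrable M (\<lambda>\<omega>. Z i \<omega> \<bullet> Z j \<omega>)"
proof (rule Bochner_Integration.integrable_bound[where f="\<lambda>\<omega>. norm (Z i \<omega>) ^ 2 + norm (Z j \<omega>) ^ 2"])
  have "integrable M (\<lambda>\<omega>. norm (Z k \<omega>) ^ 2)" if "k \<in> Inl" for k
    unfolding Z_def using transfer_int(1)[OF that, of "\<lambda>x. norm (outer x - S) ^ 2"] int_Zsq by simp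
  then show "integrable M (\<lambda>\<omega>. norm (Z i \<omega>) ^ 2 + norm (Z j \<omega>) ^ 2)" using assms by auto
  show "(\<lambda>\<omega>. Z i \<omega> \<bullet> Z j \<omega>) \<in> borel_measurable M" unfolding Z_def using assms by measurable
  have "\<bar>u \<bullet> v\<bar> \<le> norm u ^ 2 + norm v ^ 2" for u v :: "real^'p^'p"
  proof -
    have "\<bar>u \<bullet> v\<bar> \<le> norm u * norm v" by (rule Cauchy_Schwarz_ineq2)
    also have "\<dots> \<le> norm u ^ 2 + norm v ^ 2"
    proof -
      have "0 \<le> (norm u - norm v) ^ 2" by simp
      moreover have "0 \<le> norm u * norm v" by simp
      ultimately show ?thesis unfolding power2_diff mult.assoc by linarith
    qed
    finally show ?thesis .
  qed
  then show "AE \<omega> in M. norm (Z i \<omega> \<bullet> Z j \<omega>) \<le> norm (norm (Z i \<omega>) ^ 2 + norm (Z j \<omega>) ^ 2)"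
    by auto
qed

lemma Z_diag: "i \<in> Inl \<Longrightarrow> (\<integral>\<omega>. Z i \<omega> \<bullet> Z i \<omega> \<partial>M) \<le> moment P 4"
  using transfer_int(2)[of i "\<lambda>x. norm (outer x - S) ^ 2"] Zsq_le
  by (simp add: Z_def power2_norm_eq_inner)

lemma Z_off:
  assumes "i \<in> Inl" "j \<in> Inl" "i \<noteq> j"
  shows "(\<integral>\<omega>. Z i \<omega> \<bullet> Z j \<omega> \<partial>M) = 0"
proof -
  define h where "h a b x = outer x $ a $ b - S $ a $ b" for a b x
  have hm[measurable]: "h a b \<in> borel_measurable borel" for a b unfolding h_def by measurable
  have hi: "integrable M (\<lambda>\<omega>. h a b (X k \<omega>))" "(\<integral>\<omega>. h a b (X k \<omega>) \<partial>M) = 0" if "k \<in> Inl" for a b k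
  proof -
    interpret Pp: prob_space P by (rule P(1))
    have "integrable P (h a b)" unfolding h_def using int_comp by auto
    then show "integrable M (\<lambda>\<omega>. h a b (X k \<omega>))" using transfer_int(1)[OF that hm] by simp
    show "(\<integral>\<omega>. h a b (X k \<omega>) \<partial>M) = 0" using transfer_int(2)[OF that hm] comp_mean0 by (simp add: h_def)
  qed
  have ind2: "indep_var borel (\<lambda>\<omega>. h a b (X i \<omega>)) borel (\<lambda>\<omega>. h a b (X j \<omega>))" for a b
    using pair_indep assms by simp
  have eq: "Z i \<omega> \<bullet> Z j \<omega> = (\<Sum>a\<in>UNIV. \<Sum>b\<in>UNIV. h a b (X i \<omega>) * h a b (X j \<omega>))" for \<omega>
    by (simp add: Z_def h_def inner_vec_def)
  have "(\<integral>\<omega>. Z i \<omega> \<bullet> Z j \<omega> \<partial>M) = (\<Sum>a\<in>UNIV. \<Sum>b\<in>UNIV. \<integral>\<omega>. h a b (X i \<omega>) * h a b (X j \<omega>) \<partial>M)"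
    unfolding eq
    by (simp add: integrable_sum indep_var_integrable[OF ind2 hi(1)[OF assms(1)] hi(1)[OF assms(2)]])
  also have "\<dots> = 0"
    by (simp add: indep_var_lebesgue_integral[OF ind2 hi(1)[OF assms(1)] hi(1)[OF assms(2)]] hi(2) assms)
  finally show ?thesis .
qed

lemma block_var:
  assumes Bs: "Bs \<subseteq> Inl" "finite Bs" "card Bs = B" "B > 0"
  defines "D \<equiv> \<lambda>\<omega>. (1 / real B) *\<^sub>R (\<Sum>i\<in>Bs. outer (X i \<omega>)) - S"
  shows "integrable M (\<lambda>\<omega>. norm (D \<omega>) ^ 2)"
    and "(\<integral>\<omega>. norm (D \<omega>) ^ 2 \<partial>M) \<le> moment P 4 / real B"
proof -
  have Deq: "D \<omega> = (1 / real B) *\<^sub>R (\<Sum>i\<in>Bs. Z i \<omega>)" for \<omega>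
    using Bs by (simp add: D_def Z_def sum_subtractf scaleR_diff_right sum_constant_scaleR del: sum_constant)
  have sq: "norm (D \<omega>) ^ 2 = (1 / real B) ^ 2 * (\<Sum>i\<in>Bs. \<Sum>j\<in>Bs. Z i \<omega> \<bullet> Z j \<omega>)" for \<omega>
    unfolding Deq power2_norm_eq_inner
    by (simp add: inner_sum_left inner_sum_right power2_eq_square sum_distrib_left mult_ac) (rule sum.swap)
  have intij: "integrable M (\<lambda>\<omega>. Z i \<omega> \<bullet> Z j \<omega>)" if "i \<in> Bs" "j \<in> Bs" for i j
    using Z_int that Bs by auto
  show "integrable M (\<lambda>\<omega>. norm (D \<omega>) ^ 2)"
    unfolding sq using intij by (intro integrable_mult_right integrable_sum) auto
  have "(\<integral>\<omega>. norm (D \<omega>) ^ 2 \<partial>M) = (1 / real B) ^ 2 * (\<Sum>i\<in>Bs. \<Sum>j\<in>Bs. \<integral>\<omega>. Z i \<omega> \<bullet> Z j \<omega> \<partial>M)"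
    unfolding sq using intij by (simp add: integrable_sum)
  also have "(\<Sum>i\<in>Bs. \<Sum>j\<in>Bs. \<integral>\<omega>. Z i \<omega> \<bullet> Z j \<omega> \<partial>M) = (\<Sum>i\<in>Bs. \<integral>\<omega>. Z i \<omega> \<bullet> Z i \<omega> \<partial>M)"
  proof (rule sum.cong[OF refl])
    fix i assume i: "i \<in> Bs"
    have "(\<Sum>j\<in>Bs. \<integral>\<omega>. Z i \<omega> \<bullet> Z j \<omega> \<partial>M) = (\<Sum>j\<in>Bs. if j = i then \<integral>\<omega>. Z i \<omega> \<bullet> Z i \<omega> \<partial>M else 0)"
      using Z_off i Bs by (intro sum.cong) auto
    also have "\<dots> = (\<integral>\<omega>. Z i \<omega> \<bullet> Z i \<omega> \<partial>M)" using i Bs by simp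
    finally show "(\<Sum>j\<in>Bs. \<integral>\<omega>. Z i \<omega> \<bullet> Z j \<omega> \<partial>M) = (\<integral>\<omega>. Z i \<omega> \<bullet> Z i \<omega> \<partial>M)" .
  qed
  also have "(\<Sum>i\<in>Bs. \<integral>\<omega>. Z i \<omega> \<bullet> Z i \<omega> \<partial>M) \<le> (\<Sum>i\<in>Bs. moment P 4)"
    using Z_diag Bs by (intro sum_mono) auto
  also have "(\<Sum>i\<in>Bs. moment P 4) = real B * moment P 4" using Bs by simp
  finally show "(\<integral>\<omega>. norm (D \<omega>) ^ 2 \<partial>M) \<le> moment P 4 / real B"
    using Bs by (simp add: power2_eq_square field_simps)
qed

lemma D_meas:
  assumes "Bs \<subseteq> Inl"
  shows "(\<lambda>\<omega>. (1 / real B) *\<^sub>R (\<Sum>i\<in>Bs. outer (X i \<omega>)) - S) \<in> borel_measurable M"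
  using assms
  by (intro borel_measurable_diff borel_measurable_scaleR borel_measurable_sum
      measurable_compose[OF rvX outer_borel] borel_measurable_const) auto

lemma bad_prob:
  assumes Bs: "Bs \<subseteq> Inl" "finite Bs" "card Bs = B" "B > 0" and eta: "\<eta> > 0"
  defines "D \<equiv> \<lambda>\<omega>. (1 / real B) *\<^sub>R (\<Sum>i\<in>Bs. outer (X i \<omega>)) - S"
    and "T2 \<equiv> 1024 * (4 + \<eta>)^2 * moment P 4 / (\<eta>^2 * real B)"
  shows "prob {\<omega>\<in>space M. norm (D \<omega>) ^ 2 > T2} \<le> \<eta>^2 / (1024 * (4 + \<eta>)^2)"
proof -
  have Dm[measurable]: "D \<in> borel_measurable M" unfolding D_def using D_meas[OF Bs(1)] .
  have I: "integrable M (\<lambda>\<omega>. norm (D \<omega>) ^ 2)" "(\<integral>\<omega>. norm (D \<omega>) ^ 2 \<partial>M) \<le> moment P 4 / real B"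
    using block_var[OF Bs] unfolding D_def by auto
  have m4: "moment P 4 \<ge> 0" unfolding moment_def by (intro integral_nonneg_AE) auto
  show ?thesis
  proof (cases "moment P 4 > 0")
    case True
    have T2: "T2 > 0" using True eta Bs by (simp add: T2_def)
    have "prob {\<omega>\<in>space M. norm (D \<omega>) ^ 2 > T2} \<le> prob {\<omega>\<in>space M. norm (D \<omega>) ^ 2 \<ge> T2}"
      by (intro finite_measure_mono) auto
    also have "\<dots> \<le> (\<integral>\<omega>. norm (D \<omega>) ^ 2 \<partial>M) / T2"
      by (rule integral_Markov_inequality_measure[OF I(1) sets.top _ T2]) auto
    also have "\<dots> \<le> (moment P 4 / real B) / T2"
      using divide_right_mono[OF I(2), of T2] T2 by simp
    also have "\<dots> = \<eta>^2 / (1024 * (4 + \<eta>)^2)"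
      using True eta Bs by (simp add: T2_def field_simps)
    finally show ?thesis .
  next
    case False
    then have "moment P 4 = 0" using m4 by simp
    then have T20: "T2 = 0" by (simp add: T2_def)
    have "(\<integral>\<omega>. norm (D \<omega>) ^ 2 \<partial>M) \<le> 0" using I(2) \<open>moment P 4 = 0\<close> by simp
    moreover have "(\<integral>\<omega>. norm (D \<omega>) ^ 2 \<partial>M) \<ge> 0" by (intro integral_nonneg_AE) auto
    ultimately have "(\<integral>\<omega>. norm (D \<omega>) ^ 2 \<partial>M) = 0" by simp
    then have "AE \<omega> in M. norm (D \<omega>) ^ 2 = 0"
      using integral_nonneg_eq_0_iff_AE[OF I(1)] by auto
    then have "AE \<omega> in M. \<not> norm (D \<omega>) ^ 2 > T2" using T20 by auto
    then have "prob {\<omega>\<in>space M. norm (D \<omega>) ^ 2 > T2} = 0" by (rule prob_eq_0_AE)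
    then show ?thesis by simp
  qed
qed

lemma ind_blocks:
  fixes Bl :: "nat \<Rightarrow> nat set" and J :: "nat set"
  assumes J: "\<And>l. l \<in> J \<Longrightarrow> Bl l \<subseteq> Inl" "disjoint_family_on Bl J"
  shows "indep_vars (\<lambda>_. borel)
     (\<lambda>l \<omega>. if norm ((1 / real B) *\<^sub>R (\<Sum>i\<in>Bl l. outer (X i \<omega>)) - S) ^ 2 > T2 then 1 else (0::real)) J"
proof -
  define Y where "Y l f = (if norm ((1 / real B) *\<^sub>R (\<Sum>i\<in>Bl l. outer (f i)) - S) ^ 2 > T2 then 1 else (0::real))"
    for l and f :: "nat \<Rightarrow> real^'p"
  have sm: "(\<lambda>f. \<Sum>i\<in>Bl l. outer (f i)) \<in> borel_measurable (PiM (Bl l) (\<lambda>_. borel))" for l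
  proof (rule borel_measurable_sum)
    fix i assume "i \<in> Bl l"
    then show "(\<lambda>f. outer (f i)) \<in> borel_measurable (PiM (Bl l) (\<lambda>_. borel))"
      by (intro measurable_compose[OF measurable_component_singleton[of i "Bl l" "\<lambda>_. borel"] outer_borel])
  qed
  have Ym: "Y l \<in> borel_measurable (PiM (Bl l) (\<lambda>_. borel))" for l
    unfolding Y_def using sm[of l] by measurable
  have "indep_vars (\<lambda>_. borel) (\<lambda>l \<omega>. Y l (restrict (\<lambda>i. X i \<omega>) (Bl l))) J"
    by (rule indep_vars_compose2[OF indep_vars_restrict[OF ind J(1) J(2)] Ym])
  moreover have "(\<lambda>\<omega>. Y l (restrict (\<lambda>i. X i \<omega>) (Bl l))) =
      (\<lambda>\<omega>. if norm ((1 / real B) *\<^sub>R (\<Sum>i\<in>Bl l. outer (X i \<omega>)) - S) ^ 2 > T2 then 1 else (0::real))" for l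
  proof -
    have "(\<Sum>i\<in>Bl l. outer (restrict (\<lambda>i. X i \<omega>) (Bl l) i)) = (\<Sum>i\<in>Bl l. outer (X i \<omega>))" for \<omega>
      by (rule sum.cong) auto
    then show ?thesis by (simp add: Y_def)
  qed
  ultimately show ?thesis by simp
qed

end

lemma card_clean:
  fixes Bl :: "nat \<Rightarrow> nat set" and Inl Outl :: "nat set"
  assumes cov: "(\<Union>l<L. Bl l) = {..<N}"
    and disj: "\<And>l l'. l < L \<Longrightarrow> l' < L \<Longrightarrow> l \<noteq> l' \<Longrightarrow> Bl l \<inter> Bl l' = {}"
    and part: "Inl \<union> Outl = {..<N}"
  shows "L \<le> card {l. l < L \<and> Bl l \<subseteq> Inl} + card Outl"
proof -
  define J where "J = {l. l < L \<and> Bl l \<subseteq> Inl}"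
  define K where "K = {l. l < L \<and> \<not> Bl l \<subseteq> Inl}"
  have JK: "J \<union> K = {..<L}" "J \<inter> K = {}" by (auto simp: J_def K_def)
  have fin: "finite J" "finite K" by (auto simp: J_def K_def)
  have "card J + card K = L"
    using card_Un_disjoint[OF fin JK(2)] JK(1) by simp
  define f where "f l = (SOME i. i \<in> Bl l \<and> i \<notin> Inl)" for l
  have f: "f l \<in> Bl l \<and> f l \<notin> Inl" if "l \<in> K" for l
    unfolding f_def by (rule someI_ex) (use that in \<open>auto simp: K_def\<close>)
  have "f ` K \<subseteq> Outl"
  proof
    fix i assume "i \<in> f ` K"
    then obtain l where l: "l \<in> K" "i = f l" by auto
    then have "i \<in> Bl l" "i \<notin> Inl" using f by auto
    moreover have "l < L" using l by (auto simp: K_def)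
    ultimately have "i \<in> {..<N}" using cov by blast
    then show "i \<in> Outl" using part \<open>i \<notin> Inl\<close> by blast
  qed
  moreover have "inj_on f K"
  proof (rule inj_onI)
    fix l l' assume "l \<in> K" "l' \<in> K" "f l = f l'"
    then show "l = l'" using f[of l] f[of l'] disj[of l l'] by (auto simp: K_def)
  qed
  moreover have "finite Outl" using part by (metis finite_Un finite_lessThan)
  ultimately have "card K \<le> card Outl" by (metis card_inj_on_le)
  then show ?thesis using \<open>card J + card K = L\<close> by (simp add: J_def)
qed

theorem theorem2:
  fixes M :: "'a measure"
    and X :: "nat \<Rightarrow> 'a \<Rightarrow> real^'p"
    and P :: "(real^'p) measure"
    and N L B d :: nat
    and Inl Outl :: "nat set"
    and Bl :: "nat \<Rightarrow> nat set"
    and \<eta> :: real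
  assumes M: "prob_space M"
    and P: "prob_space P" "sets P = sets borel"
    and part: "Inl \<union> Outl = {..<N}" "Inl \<inter> Outl = {}"
    and blocks: "(\<Union>l<L. Bl l) = {..<N}"
      "\<And>l l'. l < L \<Longrightarrow> l' < L \<Longrightarrow> l \<noteq> l' \<Longrightarrow> Bl l \<inter> Bl l' = {}"
      "\<And>l. l < L \<Longrightarrow> card (Bl l) = B"
      "N = L * B"
    and NL: "N > L"
    and A1: "prob_space.indep_vars M (\<lambda>_. borel) X Inl"
      "\<And>i. i \<in> Inl \<Longrightarrow> distr M borel (X i) = P"
    and A2: "integrable P (\<lambda>x. norm x ^ 4)"
    and A3: "\<eta> > 0" "real L > (2 + \<eta>) * real (card Outl)"
  shows "\<exists>E\<in>sets M.
     measure M E \<ge> 1 - 2 * exp (- 2 * real L * (2 / (4 + \<eta>) - real (card Outl) / real L)^2) \<and>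
     (\<forall>\<omega>\<in>E. \<forall>Q\<in>proj_mats d.
        \<bar>MoM L Bl B (fQ Q) (\<lambda>i. X i \<omega>) - (\<integral>x. fQ Q x \<partial>P)\<bar>
        \<le> (let p = real CARD('p); \<mu>2 = moment P 2; \<mu>4 = moment P 4;
               CP = (\<mu>4 + 2 * \<mu>2^2) * (p - real d) + (\<mu>2^2 - 1) * (p - real d)^2;
               C = 2 * max (sqrt (8 * (4 + \<eta>) * CP / \<eta>))
                           (16 * sqrt ((p - real d) * \<mu>4) * (4 + \<eta>) / \<eta>)
            in C * max (sqrt (real L / real N)) (sqrt (real (card Inl)) / real N)))"
proof -
  interpret prob_space M by (rule M)
  interpret ms: mom_setting M X P Inl
    by (rule mom_setting.intro[OF M mom_setting_axioms.intro]) (use P A1 A2 in auto)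
  have B0: "B > 0" using NL blocks(4) by (cases B) auto
  have L0: "L > 0" using NL blocks(4) by (cases L) auto
  define \<mu>4 where "\<mu>4 = moment P 4"
  have m4: "\<mu>4 \<ge> 0" unfolding \<mu>4_def moment_def by (intro integral_nonneg_AE) auto
  define T2 where "T2 = 1024 * (4 + \<eta>)^2 * moment P 4 / (\<eta>^2 * real B)"
  define D where "D l \<omega> = (1 / real B) *\<^sub>R (\<Sum>i\<in>Bl l. outer (X i \<omega>)) - ms.S" for l \<omega>
  define ind where "ind l \<omega> = (if norm (D l \<omega>) ^ 2 > T2 then 1 else (0::real))" for l \<omega>
  define J where "J = {l. l < L \<and> Bl l \<subseteq> Inl}"
  define \<alpha> where "\<alpha> = \<eta>^2 / (1024 * (4 + \<eta>)^2)"
  define Ob where "Ob = real (card Outl)"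
  have finBl: "finite (Bl l)" if "l < L" for l
    using blocks(3)[OF that] B0 card_ge_0_finite by auto
  have finJ: "finite J" by (simp add: J_def)
  have JL: "J \<subseteq> {..<L}" by (auto simp: J_def)
  have cardJL: "card J \<le> L" using card_mono[OF _ JL] by simp
  have cardJ: "real L \<le> real (card J) + Ob"
    using card_clean[OF blocks(1) blocks(2) part(1)] by (simp add: J_def Ob_def)
  have Ob0: "Ob \<ge> 0" by (simp add: Ob_def)
  have LOb: "real L > (2 + \<eta>) * Ob" using A3 by (simp add: Ob_def)
  have Jpos: "card J > 0"
  proof -
    have "(2 + \<eta>) * Ob \<ge> Ob" using A3(1) Ob0 by (simp add: algebra_simps)
    then show ?thesis using cardJ LOb by linarith
  qed
  have disjJ: "disjoint_family_on Bl J"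
    unfolding disjoint_family_on_def J_def using blocks(2) by auto
  have indep: "indep_vars (\<lambda>_. borel) ind J"
    unfolding ind_def D_def
    by (rule ms.ind_blocks) (use disjJ in \<open>auto simp: J_def\<close>)
  have rv: "ind l \<in> borel_measurable M" if "l \<in> J" for l
    using indep that unfolding indep_vars_def by blast
  have expbad: "expectation (ind l) \<le> \<alpha>" if l: "l \<in> J" for l
  proof -
    have Bs: "Bl l \<subseteq> Inl" "finite (Bl l)" "card (Bl l) = B" using l finBl blocks(3) by (auto simp: J_def)
    have "expectation (ind l) = expectation (indicator {\<omega>\<in>space M. norm (D l \<omega>) ^ 2 > T2})"
      by (intro Bochner_Integration.integral_cong) (auto simp: ind_def indicator_def)
    also have "\<dots> = prob {\<omega>\<in>space M. norm (D l \<omega>) ^ 2 > T2}"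
      by (simp add: Int_absorb2 Collect_subset)
    also have "\<dots> \<le> \<alpha>"
      using ms.bad_prob[OF Bs B0 A3(1)] unfolding \<alpha>_def T2_def D_def .
    finally show ?thesis .
  qed
  define \<mu>H where "\<mu>H = (\<Sum>l\<in>J. expectation (ind l))"
  interpret H: Hoeffding_ineq M J ind "\<lambda>_. 0" "\<lambda>_. 1" \<mu>H
    by unfold_locales (use finJ indep in \<open>auto simp: \<mu>H_def ind_def\<close>)
  have muH: "\<mu>H \<le> real (card J) * \<alpha>"
    unfolding \<mu>H_def using sum_mono[of J "\<lambda>l. expectation (ind l)" "\<lambda>_. \<alpha>"] expbad by simp
  have eta4: "4 + \<eta> > 0" using A3(1) by simp
  have alpha_le: "\<alpha> \<le> \<eta> / (2 * (4 + \<eta>))"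
  proof -
    define t where "t = \<eta> / (4 + \<eta>)"
    have t1: "t \<le> 1" "t \<ge> 0" using eta4 A3(1) by (auto simp: t_def)
    have "\<alpha> = t * t / 1024" unfolding \<alpha>_def t_def by (simp add: power2_eq_square)
    also have "\<dots> \<le> t / 1024" using t1 by (simp add: mult_left_le)
    also have "\<dots> \<le> t / 2" using t1 by simp
    also have "\<dots> = \<eta> / (2 * (4 + \<eta>))" by (simp add: t_def)
    finally show ?thesis .
  qed
  define s0 where "s0 = 2 * real L / (4 + \<eta>) - Ob"
  define \<epsilon> where "\<epsilon> = real L / 2 - Ob - \<mu>H"
  have s0pos: "s0 \<ge> 0"
  proof -
    have "(4 + \<eta>) * Ob \<le> 2 * ((2 + \<eta>) * Ob)" using Ob0 A3(1) by (simp add: algebra_simps)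
    then have "(4 + \<eta>) * Ob \<le> 2 * real L" using LOb by linarith
    then show ?thesis unfolding s0_def using eta4 by (simp add: field_simps)
  qed
  have eps_ge: "\<epsilon> \<ge> s0"
  proof -
    have "\<mu>H \<le> real L * \<alpha>" using muH cardJL
      by (smt (verit) \<alpha>_def mult_right_mono of_nat_le_iff zero_le_divide_iff zero_le_power2 mult_nonneg_nonneg)
    also have "\<dots> \<le> real L * (\<eta> / (2 * (4 + \<eta>)))" using mult_left_mono[OF alpha_le, of "real L"] by simp
    finally have "\<mu>H \<le> real L * (\<eta> / (2 * (4 + \<eta>)))" .
    moreover have "real L / 2 - real L * (\<eta> / (2 * (4 + \<eta>))) = 2 * real L / (4 + \<eta>)"
      using eta4 by (simp add: field_simps)
    ultimately show ?thesis unfolding \<epsilon>_def s0_def by argo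
  qed
  define E where "E = {\<omega>\<in>space M. (\<Sum>l\<in>J. ind l \<omega>) < real L / 2 - Ob}"
  have summ: "(\<lambda>\<omega>. \<Sum>l\<in>J. ind l \<omega>) \<in> borel_measurable M"
    using rv by (intro borel_measurable_sum) auto
  have Esets: "E \<in> sets M" unfolding E_def using summ by measurable
  have compl: "space M - E = {x\<in>space M. (\<Sum>l\<in>J. ind l x) \<ge> \<mu>H + \<epsilon>}"
    by (auto simp: E_def \<epsilon>_def)
  have hoeff: "prob (space M - E) \<le> exp (- 2 * \<epsilon>^2 / real (card J))"
  proof -
    have "prob {x\<in>space M. (\<Sum>l\<in>J. ind l x) \<ge> \<mu>H + \<epsilon>} \<le> exp (-2 * \<epsilon>\<^sup>2 / (\<Sum>i\<in>J. (1 - 0)\<^sup>2))"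
      by (rule H.Hoeffding_ineq_ge) (use eps_ge s0pos Jpos in auto)
    then show ?thesis unfolding compl by simp
  qed
  have expo: "exp (- 2 * \<epsilon>^2 / real (card J)) \<le> exp (- 2 * real L * (2 / (4 + \<eta>) - real (card Outl) / real L)^2)"
  proof -
    have "s0^2 \<le> \<epsilon>^2" using eps_ge s0pos by (simp add: power_mono)
    have "real L * (2 / (4 + \<eta>) - real (card Outl) / real L)^2 = s0^2 / real L"
      using L0 by (simp add: s0_def Ob_def power2_eq_square field_simps)
    also have "\<dots> \<le> s0^2 / real (card J)"
      using Jpos cardJL by (intro divide_left_mono) auto
    also have "\<dots> \<le> \<epsilon>^2 / real (card J)" using \<open>s0^2 \<le> \<epsilon>^2\<close> by (simp add: divide_right_mono)
    finally show ?thesis by simp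
  qed
  have probE: "measure M E \<ge> 1 - 2 * exp (- 2 * real L * (2 / (4 + \<eta>) - real (card Outl) / real L)^2)"
  proof -
    have "prob (space M - E) = 1 - prob E" by (rule prob_compl[OF Esets])
    then show ?thesis using hoeff expo by (smt (verit) exp_gt_zero)
  qed
  show ?thesis
  proof (intro bexI[OF _ Esets] conjI probE ballI)
    fix \<omega> and Q :: "real^'p^'p" assume \<omega>: "\<omega> \<in> E" and Q: "Q \<in> proj_mats d"
    show "\<bar>MoM L Bl B (fQ Q) (\<lambda>i. X i \<omega>) - (\<integral>x. fQ Q x \<partial>P)\<bar>
        \<le> (let p = real CARD('p); \<mu>2 = moment P 2; \<mu>4 = moment P 4;
               CP = (\<mu>4 + 2 * \<mu>2^2) * (p - real d) + (\<mu>2^2 - 1) * (p - real d)^2;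
               C = 2 * max (sqrt (8 * (4 + \<eta>) * CP / \<eta>))
                           (16 * sqrt ((p - real d) * \<mu>4) * (4 + \<eta>) / \<eta>)
            in C * max (sqrt (real L / real N)) (sqrt (real (card Inl)) / real N))"
    proof -
      define R where "R = mat 1 - Q"
      define k where "k = real CARD('p) - real d"
      have Rk: "norm R ^ 2 = k" unfolding R_def k_def by (rule norm_I_minus_proj[OF Q])
      have k0: "k \<ge> 0" using Rk by (metis zero_le_power2)
      have normR: "norm R = sqrt k" using Rk by (metis norm_ge_zero real_sqrt_abs abs_of_nonneg)
      define c where "c = (\<integral>x. fQ Q x \<partial>P)"
      have c: "c = R \<bullet> ms.S" unfolding c_def R_def by (rule ms.integral_fQ)
      define bm where "bm l = (\<Sum>i\<in>Bl l. fQ Q (X i \<omega>)) / real B" for l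
      have bmD: "bm l - c = R \<bullet> D l \<omega>" for l
        unfolding bm_def c D_def
        by (simp add: fQ_outer R_def inner_sum_right inner_diff_right divide_inverse mult.commute)
      define \<epsilon>0 where "\<epsilon>0 = sqrt k * sqrt T2"
      define good where "good = {l\<in>J. ind l \<omega> = 0}"
      have good_close: "\<bar>bm l - c\<bar> \<le> \<epsilon>0" if "l \<in> good" for l
      proof -
        have "\<not> norm (D l \<omega>) ^ 2 > T2" using that by (auto simp: good_def ind_def split: if_splits)
        then have "norm (D l \<omega>) \<le> sqrt T2" by (simp add: real_le_rsqrt)
        have "\<bar>bm l - c\<bar> \<le> norm R * norm (D l \<omega>)" unfolding bmD by (rule Cauchy_Schwarz_ineq2)
        also have "\<dots> \<le> sqrt k * sqrt T2"
          using mult_left_mono[OF \<open>norm (D l \<omega>) \<le> sqrt T2\<close>, of "sqrt k"] normR k0 by simp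
        finally show ?thesis by (simp add: \<epsilon>0_def)
      qed
      have sumcard: "(\<Sum>l\<in>J. ind l \<omega>) = real (card {l\<in>J. ind l \<omega> \<noteq> 0})"
      proof -
        have "(\<Sum>l\<in>J. ind l \<omega>) = (\<Sum>l\<in>J. if ind l \<omega> \<noteq> 0 then 1 else 0)"
          by (intro sum.cong) (auto simp: ind_def)
        also have "\<dots> = real (card {l\<in>J. ind l \<omega> \<noteq> 0})"
          using finJ by (simp add: sum.If_cases Int_def)
        finally show ?thesis .
      qed
      have cardsplit: "card good + card {l\<in>J. ind l \<omega> \<noteq> 0} = card J"
      proof -
        have "good \<union> {l\<in>J. ind l \<omega> \<noteq> 0} = J" "good \<inter> {l\<in>J. ind l \<omega> \<noteq> 0} = {}"
          by (auto simp: good_def)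
        then show ?thesis using finJ card_Un_disjoint[of good "{l\<in>J. ind l \<omega> \<noteq> 0}"]
          by (simp add: good_def)
      qed
      have goodbig: "real (card good) > real L / 2"
      proof -
        have "(\<Sum>l\<in>J. ind l \<omega>) < real L / 2 - Ob" using \<omega> by (simp add: E_def)
        then show ?thesis using cardsplit sumcard cardJ by simp
      qed
      define xs where "xs = map bm [0..<L]"
      have lenxs: "length xs = L" by (simp add: xs_def)
      have "good \<subseteq> {i. i < length xs \<and> \<bar>xs!i - c\<bar> \<le> \<epsilon>0}"
      proof
        fix l assume l: "l \<in> good"
        then have "l < L" using JL by (auto simp: good_def)
        then show "l \<in> {i. i < length xs \<and> \<bar>xs!i - c\<bar> \<le> \<epsilon>0}"
          using good_close[OF l] by (simp add: xs_def)
      qed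
      then have "card good \<le> card {i. i < length xs \<and> \<bar>xs!i - c\<bar> \<le> \<epsilon>0}"
        by (intro card_mono) auto
      then have "real (card {i. i < length xs \<and> \<bar>xs!i - c\<bar> \<le> \<epsilon>0}) > real (length xs) / 2"
        using goodbig lenxs by linarith
      then have med: "\<bar>median xs - c\<bar> \<le> \<epsilon>0"
        by (intro median_close) (use lenxs L0 in auto)
      have MoMeq: "MoM L Bl B (fQ Q) (\<lambda>i. X i \<omega>) = median xs"
        unfolding MoM_def xs_def by (simp add: bm_def[abs_def])
      define A2 where "A2 = 16 * sqrt (k * \<mu>4) * (4 + \<eta>) / \<eta>"
      have LN: "real L / real N = 1 / real B" using blocks(4) L0 by (simp add: field_simps)
      have eps_eq: "\<epsilon>0 = 2 * A2 * sqrt (real L / real N)"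
      proof -
        have "\<epsilon>0 = sqrt (k * T2)" by (simp add: \<epsilon>0_def real_sqrt_mult)
        also have "k * T2 = (32 * (4 + \<eta>) / \<eta>)^2 * (k * \<mu>4) * (1 / real B)"
          using A3(1) B0 by (simp add: T2_def \<mu>4_def field_simps power2_eq_square)
        also have "sqrt \<dots> = (32 * (4 + \<eta>) / \<eta>) * sqrt (k * \<mu>4) * sqrt (1 / real B)"
        proof -
          have sa: "sqrt ((32 * (4 + \<eta>) / \<eta>)^2) = 32 * (4 + \<eta>) / \<eta>"
            using A3(1) eta4 by simp
          show ?thesis by (simp only: real_sqrt_mult sa)
        qed
        also have "\<dots> = 2 * A2 * sqrt (real L / real N)"
          unfolding LN A2_def by simp
        finally show ?thesis .
      qed
      show ?thesis
        unfolding Let_def MoMeq c_def[symmetric]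
      proof -
        let ?C = "2 * max (sqrt (8 * (4 + \<eta>) * ((moment P 4 + 2 * (moment P 2)\<^sup>2) * (real CARD('p) - real d) +
                 ((moment P 2)\<^sup>2 - 1) * (real CARD('p) - real d)\<^sup>2) / \<eta>))
                 (16 * sqrt ((real CARD('p) - real d) * moment P 4) * (4 + \<eta>) / \<eta>)"
        have CA: "?C \<ge> 2 * A2" by (simp add: A2_def k_def \<mu>4_def)
        have A20: "A2 \<ge> 0" using A3(1) eta4 k0 m4 by (simp add: A2_def)
        have "\<bar>median xs - c\<bar> \<le> 2 * A2 * sqrt (real L / real N)" using med eps_eq by simp
        also have "\<dots> \<le> ?C * sqrt (real L / real N)"
          using CA by (intro mult_right_mono) auto
        also have "\<dots> \<le> ?C * max (sqrt (real L / real N)) (sqrt (real (card Inl)) / real N)"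
          using CA A20 by (intro mult_left_mono) auto
        finally show "\<bar>median xs - c\<bar> \<le> ?C * max (sqrt (real L / real N)) (sqrt (real (card Inl)) / real N)" .
      qed
    qed
  qed
qed

end
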